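(* Let $\mathcal{A}$ be an association scheme with splitting field $L$, and let $E\subseteq\mathbb{C}$ be a field containing $L$ and closed under complex conjugation. For any Bose–Mesner algebra automorphism $\psi$ of $E[\mathcal{A}]$, the fixed-point space $\{M\in E[\mathcal{A}]: M^\psi=M\}$ equals $E[\mathcal{B}]$ for some subscheme $\mathcal{B}$ of $\mathcal{A}$.
   Context: An association scheme on $v$ vertices is a set $\mathcal{A}=\{A_0,\ldots,A_d\}$ of $v\times v$ $(0,1)$-matrices with $A_0=I$, $\sum_iA_i=J$, closed under transpose, pairwise commuting, and with all products $A_iA_j$ in the span of $\mathcal{A}$. Its principal idempotents are the pairwise orthogonal Hermitian idempotents $E_0,\dots,E_d$ summing to $I$ that form a basis of the span, with $A_iE_j=p_i(j)E_j$; the splitting field $L$ is $\mathbb{Q}(p_i(j):i,j)$. $E[\mathcal{A}]$ is the $E$-span of $\mathcal{A}$; $\circ$ is the Schur product. A Bose–Mesner algebra automorphism of $E[\mathcal{A}]$ is an invertible $E$-linear map $\psi$ with $(MN)^\psi=M^\psi N^\psi$, $(M\circ N)^\psi=M^\psi\circ N^\psi$ and $(M^* )^\psi=(M^\psi)^*$. A subscheme (fusion scheme) of $\mathcal{A}$ is an association scheme $\mathcal{B}=\{B_0,\ldots,B_e\}$ with $B_0=I$ and each $B_i=\sum_{j\in C_i}A_j$ for a partition $\{C_0=\{0\},C_1,\ldots,C_e\}$ of $\{0,\ldots,d\}$. *)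

theory Defs
  imports Complex_Main
begin

type_synonym 'v cmat = "'v \<Rightarrow> 'v \<Rightarrow> complex"

definition mmult :: "('v::finite) cmat \<Rightarrow> 'v cmat \<Rightarrow> 'v cmat" where
  "mmult M N = (\<lambda>i j. \<Sum>k\<in>UNIV. M i k * N k j)"

definition schur :: "'v cmat \<Rightarrow> 'v cmat \<Rightarrow> 'v cmat" where
  "schur M N = (\<lambda>i j. M i j * N i j)"

definition madd :: "'v cmat \<Rightarrow> 'v cmat \<Rightarrow> 'v cmat" where
  "madd M N = (\<lambda>i j. M i j + N i j)"

definition mscale :: "complex \<Rightarrow> 'v cmat \<Rightarrow> 'v cmat" where
  "mscale c M = (\<lambda>i j. c * M i j)"

definition mtrans :: "'v cmat \<Rightarrow> 'v cmat" where
  "mtrans M = (\<lambda>i j. M j i)"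

definition mstar :: "'v cmat \<Rightarrow> 'v cmat" where
  "mstar M = (\<lambda>i j. cnj (M j i))"

definition mid :: "'v cmat" where
  "mid = (\<lambda>i j. if i = j then 1 else 0)"

definition mones :: "'v cmat" where
  "mones = (\<lambda>i j. 1)"

definition mzero :: "'v cmat" where
  "mzero = (\<lambda>i j. 0)"

definition msum :: "('a \<Rightarrow> 'v cmat) \<Rightarrow> 'a set \<Rightarrow> 'v cmat" where
  "msum f S = (\<lambda>i j. \<Sum>k\<in>S. f k i j)"

definition lin_span :: "complex set \<Rightarrow> (nat \<Rightarrow> 'v cmat) \<Rightarrow> nat \<Rightarrow> 'v cmat set" where
  "lin_span K A d = {M. \<exists>c. (\<forall>k\<le>d. c k \<in> K) \<and> M = msum (\<lambda>k. mscale (c k) (A k)) {0..d}}"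

definition assoc_scheme :: "(nat \<Rightarrow> ('v::finite) cmat) \<Rightarrow> nat \<Rightarrow> bool" where
  "assoc_scheme A d \<longleftrightarrow>
     (\<forall>i\<le>d. (\<forall>x y. A i x y = 0 \<or> A i x y = 1) \<and> A i \<noteq> mzero) \<and>
     A 0 = mid \<and>
     msum A {0..d} = mones \<and>
     (\<forall>i\<le>d. \<exists>j\<le>d. mtrans (A i) = A j) \<and>
     (\<forall>i\<le>d. \<forall>j\<le>d. mmult (A i) (A j) = mmult (A j) (A i)) \<and>
     (\<forall>i\<le>d. \<forall>j\<le>d. mmult (A i) (A j) \<in> lin_span UNIV A d)"

definition lin_indep :: "(nat \<Rightarrow> 'v cmat) \<Rightarrow> nat \<Rightarrow> bool" where
  "lin_indep A d \<longleftrightarrow>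
     (\<forall>c. msum (\<lambda>k. mscale (c k) (A k)) {0..d} = mzero \<longrightarrow> (\<forall>k\<le>d. c k = 0))"

definition principal_idempotents :: "(nat \<Rightarrow> ('v::finite) cmat) \<Rightarrow> nat \<Rightarrow> (nat \<Rightarrow> 'v cmat) \<Rightarrow> bool" where
  "principal_idempotents A d Es \<longleftrightarrow>
     (\<forall>j\<le>d. mmult (Es j) (Es j) = Es j \<and> mstar (Es j) = Es j) \<and>
     (\<forall>i\<le>d. \<forall>j\<le>d. i \<noteq> j \<longrightarrow> mmult (Es i) (Es j) = mzero) \<and>
     msum Es {0..d} = mid \<and>
     lin_indep Es d \<and>
     lin_span UNIV Es d = lin_span UNIV A d"

text \<open>The field K contains the splitting field L = Q(p_i(j)) of the scheme:
  with principal idempotents Es and A_i E_j = p_i(j) E_j, all p_i(j) lie in K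
  (K being a subfield of the complex numbers, it then contains all of L).\<close>
definition contains_splitting_field :: "complex set \<Rightarrow> (nat \<Rightarrow> ('v::finite) cmat) \<Rightarrow> nat \<Rightarrow> bool" where
  "contains_splitting_field K A d \<longleftrightarrow>
     (\<exists>Es p. principal_idempotents A d Es \<and>
        (\<forall>i\<le>d. \<forall>j\<le>d. mmult (A i) (Es j) = mscale (p i j) (Es j)) \<and>
        (\<forall>i\<le>d. \<forall>j\<le>d. p i j \<in> K))"

definition subfield_complex :: "complex set \<Rightarrow> bool" where
  "subfield_complex K \<longleftrightarrow> 0 \<in> K \<and> 1 \<in> K \<and>
     (\<forall>x\<in>K. \<forall>y\<in>K. x + y \<in> K \<and> x * y \<in> K) \<and>
     (\<forall>x\<in>K. - x \<in> K \<and> inverse x \<in> K)"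

definition BM_automorphism :: "complex set \<Rightarrow> (nat \<Rightarrow> ('v::finite) cmat) \<Rightarrow> nat \<Rightarrow> ('v cmat \<Rightarrow> 'v cmat) \<Rightarrow> bool" where
  "BM_automorphism K A d \<psi> \<longleftrightarrow>
     bij_betw \<psi> (lin_span K A d) (lin_span K A d) \<and>
     (\<forall>M\<in>lin_span K A d. \<forall>N\<in>lin_span K A d. \<forall>a\<in>K. \<forall>b\<in>K.
        \<psi> (madd (mscale a M) (mscale b N)) = madd (mscale a (\<psi> M)) (mscale b (\<psi> N))) \<and>
     (\<forall>M\<in>lin_span K A d. \<forall>N\<in>lin_span K A d. \<psi> (mmult M N) = mmult (\<psi> M) (\<psi> N)) \<and>
     (\<forall>M\<in>lin_span K A d. \<forall>N\<in>lin_span K A d. \<psi> (schur M N) = schur (\<psi> M) (\<psi> N)) \<and>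
     (\<forall>M\<in>lin_span K A d. \<psi> (mstar M) = mstar (\<psi> M))"

definition subscheme :: "(nat \<Rightarrow> ('v::finite) cmat) \<Rightarrow> nat \<Rightarrow> (nat \<Rightarrow> 'v cmat) \<Rightarrow> nat \<Rightarrow> bool" where
  "subscheme B e A d \<longleftrightarrow> assoc_scheme B e \<and>
     (\<exists>C :: nat \<Rightarrow> nat set.
        C 0 = {0} \<and>
        (\<forall>i\<le>e. C i \<noteq> {}) \<and>
        (\<forall>i\<le>e. \<forall>j\<le>e. i \<noteq> j \<longrightarrow> C i \<inter> C j = {}) \<and>
        (\<Union>i\<in>{0..e}. C i) = {0..d} \<and>
        (\<forall>i\<le>e. B i = msum A (C i)))"

end

theory Submission
  imports Defs
begin



locale ctx =
  fixes A :: "nat \<Rightarrow> ('v::finite) cmat" and d :: nat and E :: "complex set"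
    and \<psi> :: "'v cmat \<Rightarrow> 'v cmat"
  assumes AS: "assoc_scheme A d" and SF: "subfield_complex E"
    and BM: "BM_automorphism E A d \<psi>"
begin

lemma A01: "k \<le> d \<Longrightarrow> A k x y = 0 \<or> A k x y = 1"
  using AS unfolding assoc_scheme_def by blast
lemma Anz: "k \<le> d \<Longrightarrow> A k \<noteq> mzero"
  using AS unfolding assoc_scheme_def by blast
lemma A0: "A 0 = mid"
  using AS unfolding assoc_scheme_def by blast
lemma Asum: "(\<Sum>k\<in>{0..d}. A k x y) = 1"
proof -
  have "msum A {0..d} = mones" using AS unfolding assoc_scheme_def by blast
  then show ?thesis unfolding msum_def mones_def by metis
qed

lemma ex1: "\<exists>!k. k \<le> d \<and> A k x y = 1"
proof -
  let ?S = "{k\<in>{0..d}. A k x y = 1}"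
  have "(\<Sum>k\<in>{0..d}. A k x y) = (\<Sum>k\<in>?S. 1)"
    using A01[of _ x y] by (intro sum.mono_neutral_cong_right) fastforce+
  then have "of_nat (card ?S) = (1::complex)" using Asum by simp
  then have "card ?S = 1" by (metis of_nat_1 of_nat_eq_iff)
  then obtain k where kS: "?S = {k}" by (rule card_1_singletonE)
  have "k \<in> ?S" using kS by blast
  then have k1: "k \<le> d \<and> A k x y = 1" by simp
  have k2: "\<And>j. j \<le> d \<Longrightarrow> A j x y = 1 \<Longrightarrow> j = k"
  proof -
    fix j assume "j \<le> d" "A j x y = 1"
    then have "j \<in> ?S" by simp
    then show "j = k" using kS by blast
  qed
  show ?thesis using k1 k2 by blast
qed

definition idx where "idx x y = (THE k. k \<le> d \<and> A k x y = 1)"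

lemma idx: "idx x y \<le> d" "A (idx x y) x y = 1"
  using theI'[OF ex1[of x y]] unfolding idx_def by auto

lemma Aval: "k \<le> d \<Longrightarrow> A k x y = (if k = idx x y then 1 else 0)"
  using A01[of k x y] ex1[of x y] idx[of x y] by auto

lemma msum_eval: "T \<subseteq> {0..d} \<Longrightarrow>
   msum (\<lambda>k. mscale (c k) (A k)) T x y = (if idx x y \<in> T then c (idx x y) else 0)"
proof -
  assume T: "T \<subseteq> {0..d}"
  then have fT: "finite T" using finite_subset by blast
  have "(\<Sum>k\<in>T. c k * A k x y) = (\<Sum>k\<in>T. if k = idx x y then c k else 0)"
    by (rule sum.cong) (use T Aval in auto)
  then show ?thesis unfolding msum_def mscale_def using fT by simp
qed

lemma msumA_eval: "T \<subseteq> {0..d} \<Longrightarrow> msum A T x y = (if idx x y \<in> T then 1 else 0)"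
proof -
  assume T: "T \<subseteq> {0..d}"
  then have fT: "finite T" using finite_subset by blast
  have "(\<Sum>k\<in>T. A k x y) = (\<Sum>k\<in>T. if k = idx x y then 1 else 0)"
    by (rule sum.cong) (use T Aval in auto)
  then show ?thesis unfolding msum_def using fT by simp
qed

abbreviation lc where "lc c \<equiv> msum (\<lambda>k. mscale (c k) (A k)) {0..d}"

lemma lc_eval: "lc c = (\<lambda>x y. c (idx x y))"
  by (intro ext) (simp add: msum_eval idx)

lemma idx_surj: "k \<le> d \<Longrightarrow> \<exists>x y. idx x y = k"
proof -
  assume k: "k \<le> d"
  then obtain x y where "A k x y \<noteq> 0" using Anz[OF k] unfolding mzero_def by (meson ext)
  then show ?thesis using Aval[OF k] by (metis)
qed

lemma lc_eq: "lc a = lc b \<longleftrightarrow> (\<forall>k\<le>d. a k = b k)"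
proof
  assume h: "lc a = lc b"
  show "\<forall>k\<le>d. a k = b k"
  proof (intro allI impI)
    fix k assume "k \<le> d"
    then obtain x y where "idx x y = k" using idx_surj by blast
    then show "a k = b k" using h unfolding lc_eval by metis
  qed
next
  assume "\<forall>k\<le>d. a k = b k" then show "lc a = lc b" unfolding lc_eval using idx by auto
qed

lemma A_lc: "k \<le> d \<Longrightarrow> A k = lc (\<lambda>j. if j = k then 1 else 0)"
  unfolding lc_eval by (intro ext) (simp add: Aval)

lemma A_inj: "i \<le> d \<Longrightarrow> j \<le> d \<Longrightarrow> A i = A j \<Longrightarrow> i = j"
proof -
  assume ij: "i \<le> d" "j \<le> d" "A i = A j"
  obtain x y where xy: "idx x y = i" using idx_surj[OF ij(1)] by blast
  have "A j x y = 1" using ij(3) idx(2)[of x y] xy by simp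
  then have "j = idx x y" using Aval[OF ij(2), of x y] by (simp split: if_splits)
  then show ?thesis using xy by simp
qed

end



context ctx begin

abbreviation SP where "SP \<equiv> lin_span E A d"

lemma E0: "0 \<in> E" and E1: "1 \<in> E" and Eadd: "a \<in> E \<Longrightarrow> b \<in> E \<Longrightarrow> a + b \<in> E"
  and Emul: "a \<in> E \<Longrightarrow> b \<in> E \<Longrightarrow> a * b \<in> E"
  using SF unfolding subfield_complex_def by auto

lemma SP_iff: "M \<in> SP \<longleftrightarrow> (\<exists>c. (\<forall>k\<le>d. c k \<in> E) \<and> M = lc c)"
  unfolding lin_span_def by simp

lemma lc_SP: "(\<forall>k\<le>d. c k \<in> E) \<Longrightarrow> lc c \<in> SP"
  using SP_iff by blast

lemma mzero_lc: "mzero = lc (\<lambda>_. 0)" unfolding lc_eval mzero_def by simp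
lemma mzero_SP: "mzero \<in> SP" using lc_SP[of "\<lambda>_. 0"] E0 mzero_lc by simp
lemma A_SP: "k \<le> d \<Longrightarrow> A k \<in> SP"
  using A_lc lc_SP[of "\<lambda>j. if j = k then 1 else 0"] E0 E1 by simp

lemma psi_bij: "bij_betw \<psi> SP SP" using BM unfolding BM_automorphism_def by blast
lemma psi_SP: "M \<in> SP \<Longrightarrow> \<psi> M \<in> SP" using psi_bij bij_betwE by blast
lemma psi_inj: "M \<in> SP \<Longrightarrow> N \<in> SP \<Longrightarrow> \<psi> M = \<psi> N \<Longrightarrow> M = N"
  using psi_bij unfolding bij_betw_def inj_on_def by blast
lemma psi_surj: "N \<in> SP \<Longrightarrow> \<exists>M\<in>SP. \<psi> M = N"
  using psi_bij unfolding bij_betw_def by (metis imageE)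
lemma psi_lin: "M \<in> SP \<Longrightarrow> N \<in> SP \<Longrightarrow> a \<in> E \<Longrightarrow> b \<in> E \<Longrightarrow>
   \<psi> (madd (mscale a M) (mscale b N)) = madd (mscale a (\<psi> M)) (mscale b (\<psi> N))"
  using BM unfolding BM_automorphism_def by blast
lemma psi_mult: "M \<in> SP \<Longrightarrow> N \<in> SP \<Longrightarrow> \<psi> (mmult M N) = mmult (\<psi> M) (\<psi> N)"
  using BM unfolding BM_automorphism_def by blast
lemma psi_schur: "M \<in> SP \<Longrightarrow> N \<in> SP \<Longrightarrow> \<psi> (schur M N) = schur (\<psi> M) (\<psi> N)"
  using BM unfolding BM_automorphism_def by blast
lemma psi_star: "M \<in> SP \<Longrightarrow> \<psi> (mstar M) = mstar (\<psi> M)"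
  using BM unfolding BM_automorphism_def by blast

lemma psi_zero: "\<psi> mzero = mzero"
proof -
  have "\<psi> (madd (mscale 0 mzero) (mscale 0 mzero)) = madd (mscale 0 (\<psi> mzero)) (mscale 0 (\<psi> mzero))"
    using psi_lin mzero_SP E0 by blast
  moreover have "madd (mscale 0 M) (mscale 0 N) = mzero" for M N :: "'v cmat"
    unfolding madd_def mscale_def mzero_def by simp
  ultimately show ?thesis by simp
qed

lemma psi_add: "M \<in> SP \<Longrightarrow> N \<in> SP \<Longrightarrow> \<psi> (madd M N) = madd (\<psi> M) (\<psi> N)"
  using psi_lin[of M N 1 1] E1 unfolding mscale_def by simp

lemma psi_scale: "M \<in> SP \<Longrightarrow> a \<in> E \<Longrightarrow> \<psi> (mscale a M) = mscale a (\<psi> M)"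
proof -
  assume M: "M \<in> SP" and a: "a \<in> E"
  have "\<psi> (madd (mscale a M) (mscale 0 mzero)) = madd (mscale a (\<psi> M)) (mscale 0 (\<psi> mzero))"
    using psi_lin M mzero_SP a E0 by blast
  moreover have "madd P (mscale 0 N) = P" for P N :: "'v cmat"
    unfolding madd_def mscale_def by simp
  ultimately show ?thesis by simp
qed

lemma msum_part: "T \<subseteq> {0..d} \<Longrightarrow> msum (\<lambda>k. mscale (c k) (A k)) T = lc (\<lambda>k. if k \<in> T then c k else 0)"
  by (intro ext) (simp add: msum_eval idx)

lemma psi_msum: "finite T \<Longrightarrow> T \<subseteq> {0..d} \<Longrightarrow> (\<forall>k\<le>d. c k \<in> E) \<Longrightarrow>
   \<psi> (msum (\<lambda>k. mscale (c k) (A k)) T) = msum (\<lambda>k. mscale (c k) (\<psi> (A k))) T"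
proof (induction T rule: finite_induct)
  case empty
  then show ?case using psi_zero unfolding msum_def mzero_def by simp
next
  case (insert k T)
  have k: "k \<le> d" using insert by auto
  have split: "msum f (insert k T) = madd (f k) (msum f T)" for f :: "nat \<Rightarrow> 'v cmat"
    unfolding msum_def madd_def using insert(1,2) by (intro ext) simp
  have inT: "msum (\<lambda>k. mscale (c k) (A k)) T \<in> SP"
    using msum_part[of T c] insert lc_SP[of "\<lambda>k. if k \<in> T then c k else 0"] E0 by auto
  have "\<psi> (mscale (c k) (A k)) = mscale (c k) (\<psi> (A k))"
    using psi_scale A_SP k insert by auto
  moreover have "mscale (c k) (A k) = lc (\<lambda>j. if j = k then c k else 0)"
    unfolding lc_eval by (simp add: mscale_def fun_eq_iff Aval k)
  then have "mscale (c k) (A k) \<in> SP"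
    using lc_SP[of "\<lambda>j. if j = k then c k else 0"] E0 insert k by auto
  ultimately show ?case using split psi_add inT insert by simp
qed

lemma psi_lc: "(\<forall>k\<le>d. c k \<in> E) \<Longrightarrow> \<psi> (lc c) = msum (\<lambda>k. mscale (c k) (\<psi> (A k))) {0..d}"
  using psi_msum by simp

lemma schur_lc: "schur (lc a) (lc b) = lc (\<lambda>k. a k * b k)"
  unfolding lc_eval schur_def by simp

lemma schur_AA: "i \<le> d \<Longrightarrow> schur (A i) (A i) = A i"
  unfolding schur_def by (intro ext) (simp add: Aval)
lemma schur_AB: "i \<le> d \<Longrightarrow> j \<le> d \<Longrightarrow> i \<noteq> j \<Longrightarrow> schur (A i) (A j) = mzero"
  unfolding schur_def mzero_def by (intro ext) (simp add: Aval)

lemma sigma_exists: "\<exists>\<sigma>. \<forall>i\<le>d. \<sigma> i \<le> d \<and> \<psi> (A i) = A (\<sigma> i)"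
proof -
  have "\<forall>i. \<exists>s. i \<le> d \<longrightarrow> (\<forall>k\<le>d. s k \<in> E) \<and> \<psi> (A i) = lc s"
  proof
    fix i
    show "\<exists>s. i \<le> d \<longrightarrow> (\<forall>k\<le>d. s k \<in> E) \<and> \<psi> (A i) = lc s"
    proof (cases "i \<le> d")
      case True
      then have "\<psi> (A i) \<in> SP" by (intro psi_SP A_SP)
      then obtain s where "(\<forall>k\<le>d. s k \<in> E) \<and> \<psi> (A i) = lc s" unfolding SP_iff by blast
      then show ?thesis by blast
    qed simp
  qed
  from choice[OF this] obtain s where s0: "\<forall>i. i \<le> d \<longrightarrow> (\<forall>k\<le>d. s i k \<in> E) \<and> \<psi> (A i) = lc (s i)"
    by blast
  then have sE: "\<And>i k. i \<le> d \<Longrightarrow> k \<le> d \<Longrightarrow> s i k \<in> E" and sA: "\<And>i. i \<le> d \<Longrightarrow> \<psi> (A i) = lc (s i)"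
    by auto
  define S where "S i = {k \<in> {0..d}. s i k = 1}" for i
  have s01: "s i k = (if k \<in> S i then 1 else 0)" if "i \<le> d" "k \<le> d" for i k
  proof -
    have "lc (s i) = \<psi> (A i)" using sA[OF that(1)] by simp
    also have "\<dots> = \<psi> (schur (A i) (A i))" using schur_AA[OF that(1)] by simp
    also have "\<dots> = schur (\<psi> (A i)) (\<psi> (A i))" using psi_schur[OF A_SP[OF that(1)] A_SP[OF that(1)]] .
    also have "\<dots> = lc (\<lambda>k. s i k * s i k)" unfolding sA[OF that(1)] by (rule schur_lc)
    finally have "s i k = s i k * s i k" unfolding lc_eq using that(2) by blast
    then have "s i k = 0 \<or> s i k = 1"
      by (metis mult_cancel_left1 mult_eq_0_iff)
    then show ?thesis unfolding S_def using that by auto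
  qed
  have Sne: "S i \<noteq> {}" if "i \<le> d" for i
  proof
    assume e: "S i = {}"
    have "\<forall>k\<le>d. s i k = 0" using s01[OF that] e by simp
    then have "lc (s i) = lc (\<lambda>_. 0)" unfolding lc_eq by simp
    then have "\<psi> (A i) = \<psi> mzero" using sA[OF that] psi_zero mzero_lc by simp
    then have "A i = mzero" by (rule psi_inj[OF A_SP[OF that] mzero_SP])
    then show False using Anz that by blast
  qed
  have Sdis: "S i \<inter> S j = {}" if "i \<le> d" "j \<le> d" "i \<noteq> j" for i j
  proof -
    have "lc (\<lambda>_. 0) = \<psi> (schur (A i) (A j))" using schur_AB[OF that] psi_zero mzero_lc by simp
    also have "\<dots> = schur (\<psi> (A i)) (\<psi> (A j))" using psi_schur[OF A_SP[OF that(1)] A_SP[OF that(2)]] .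
    also have "\<dots> = lc (\<lambda>k. s i k * s j k)" unfolding sA[OF that(1)] sA[OF that(2)] by (rule schur_lc)
    finally have "\<forall>k\<le>d. 0 = s i k * s j k" unfolding lc_eq .
    then show ?thesis unfolding S_def by auto
  qed
  have Ssub: "S i \<subseteq> {0..d}" for i unfolding S_def by auto
  have fin: "finite (S i)" for i using Ssub finite_subset by blast
  have card1: "card (S i) = 1" if "i \<le> d" for i
  proof (rule ccontr)
    assume "card (S i) \<noteq> 1"
    moreover have "card (S i) \<noteq> 0" using Sne[OF that] fin by simp
    ultimately have lt: "1 < card (S i)" by linarith
    have ge: "\<forall>j\<in>{0..d}. 1 \<le> card (S j)"
    proof
      fix j assume "j \<in> {0..d}"
      then have "card (S j) \<noteq> 0" using Sne fin by simp
      then show "1 \<le> card (S j)" by linarith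
    qed
    have "(\<Sum>j\<in>{0..d}. (1::nat)) < (\<Sum>j\<in>{0..d}. card (S j))"
      by (rule sum_strict_mono_ex1) (use ge lt that in auto)
    also have "\<dots> = card (\<Union>j\<in>{0..d}. S j)"
      by (rule card_UN_disjoint[symmetric]) (use fin Sdis in auto)
    also have "\<dots> \<le> card {0..d}"
      by (rule card_mono) (use Ssub in auto)
    finally show False by simp
  qed
  have "\<forall>i. \<exists>k. i \<le> d \<longrightarrow> S i = {k}"
  proof
    fix i show "\<exists>k. i \<le> d \<longrightarrow> S i = {k}"
    proof (cases "i \<le> d")
      case True
      then obtain k where "S i = {k}" using card1[OF True] by (elim card_1_singletonE)
      then show ?thesis by blast
    qed simp
  qed
  from choice[OF this] obtain \<sigma> where sig0: "\<forall>i. i \<le> d \<longrightarrow> S i = {\<sigma> i}" by blast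
  have "\<sigma> i \<le> d \<and> \<psi> (A i) = A (\<sigma> i)" if "i \<le> d" for i
  proof
    have sg: "S i = {\<sigma> i}" using sig0 that by blast
    then show le: "\<sigma> i \<le> d" using Ssub[of i] by auto
    have "\<forall>k\<le>d. s i k = (if k = \<sigma> i then 1 else 0)" using s01[OF that] sg by simp
    then have "\<psi> (A i) = lc (\<lambda>j. if j = \<sigma> i then 1 else 0)"
      using sA[OF that] lc_eq by simp
    then show "\<psi> (A i) = A (\<sigma> i)" using A_lc[OF le] by simp
  qed
  then show ?thesis by blast
qed

end



locale ctx2 = ctx +
  fixes \<sigma> :: "nat \<Rightarrow> nat"
  assumes sig_le: "i \<le> d \<Longrightarrow> \<sigma> i \<le> d"
    and psiA: "i \<le> d \<Longrightarrow> \<psi> (A i) = A (\<sigma> i)"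
begin

lemma sig_inj: "i \<le> d \<Longrightarrow> j \<le> d \<Longrightarrow> \<sigma> i = \<sigma> j \<Longrightarrow> i = j"
proof -
  assume ij: "i \<le> d" "j \<le> d" "\<sigma> i = \<sigma> j"
  then have "\<psi> (A i) = \<psi> (A j)" using psiA by simp
  then have "A i = A j" using psi_inj A_SP ij by blast
  then show ?thesis using A_inj[of i j] ij by simp
qed

lemma sig_bij: "bij_betw \<sigma> {0..d} {0..d}"
proof -
  have inj: "inj_on \<sigma> {0..d}"
  proof (rule inj_onI)
    fix x y assume "x \<in> {0..d}" "y \<in> {0..d}" "\<sigma> x = \<sigma> y"
    then show "x = y" using sig_inj[of x y] by simp
  qed
  have "\<sigma> ` {0..d} \<subseteq> {0..d}" using sig_le by auto
  then have "\<sigma> ` {0..d} = {0..d}" using endo_inj_surj[OF _ _ inj] by blast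
  then show ?thesis using inj unfolding bij_betw_def by blast
qed

definition \<tau> where "\<tau> = the_inv_into {0..d} \<sigma>"

lemma tau: "j \<le> d \<Longrightarrow> \<tau> j \<le> d \<and> \<sigma> (\<tau> j) = j"
proof -
  assume j: "j \<le> d"
  then have jj: "j \<in> {0..d}" by simp
  have "\<tau> j \<in> {0..d}" unfolding \<tau>_def
    using bij_betwE[OF bij_betw_the_inv_into[OF sig_bij]] jj by blast
  moreover have "\<sigma> (\<tau> j) = j" unfolding \<tau>_def using f_the_inv_into_f_bij_betw[OF sig_bij jj] .
  ultimately show ?thesis by simp
qed

lemma tau_sig: "k \<le> d \<Longrightarrow> \<tau> (\<sigma> k) = k"
  unfolding \<tau>_def using the_inv_into_f_f[of \<sigma> "{0..d}" k] sig_bij unfolding bij_betw_def by simp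

lemma psi_lc2: "(\<forall>k\<le>d. c k \<in> E) \<Longrightarrow> \<psi> (lc c) = lc (\<lambda>j. c (\<tau> j))"
proof -
  assume cE: "\<forall>k\<le>d. c k \<in> E"
  have "\<psi> (lc c) x y = c (\<tau> (idx x y))" for x y
  proof -
    have "\<psi> (lc c) x y = (\<Sum>k\<in>{0..d}. c k * A (\<sigma> k) x y)"
      using psi_lc[OF cE] psiA unfolding msum_def mscale_def by simp
    also have "\<dots> = (\<Sum>k\<in>{0..d}. if k = \<tau> (idx x y) then c k else 0)"
    proof (rule sum.cong)
      fix k assume k: "k \<in> {0..d}"
      have "(\<sigma> k = idx x y) = (k = \<tau> (idx x y))"
        using tau[OF idx(1), of x y] tau_sig[of k] k by (metis atLeastAtMost_iff)
      then show "c k * A (\<sigma> k) x y = (if k = \<tau> (idx x y) then c k else 0)"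
        using Aval[of "\<sigma> k"] sig_le k by simp
    qed simp
    also have "\<dots> = c (\<tau> (idx x y))" using tau[OF idx(1)] by simp
    finally show ?thesis .
  qed
  then show ?thesis unfolding lc_eval by blast
qed

lemma fixed_iff: "(\<forall>k\<le>d. c k \<in> E) \<Longrightarrow> \<psi> (lc c) = lc c \<longleftrightarrow> (\<forall>k\<le>d. c (\<sigma> k) = c k)"
proof -
  assume cE: "\<forall>k\<le>d. c k \<in> E"
  have "\<psi> (lc c) = lc c \<longleftrightarrow> (\<forall>j\<le>d. c (\<tau> j) = c j)" using psi_lc2[OF cE] lc_eq by simp
  also have "\<dots> \<longleftrightarrow> (\<forall>k\<le>d. c (\<sigma> k) = c k)"
  proof
    assume h: "\<forall>j\<le>d. c (\<tau> j) = c j"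
    show "\<forall>k\<le>d. c (\<sigma> k) = c k"
    proof (intro allI impI)
      fix k assume k: "k \<le> d"
      have "c (\<tau> (\<sigma> k)) = c (\<sigma> k)" using h sig_le k by blast
      then show "c (\<sigma> k) = c k" using tau_sig k by simp
    qed
  next
    assume h: "\<forall>k\<le>d. c (\<sigma> k) = c k"
    show "\<forall>j\<le>d. c (\<tau> j) = c j"
    proof (intro allI impI)
      fix j assume j: "j \<le> d"
      have "c (\<sigma> (\<tau> j)) = c (\<tau> j)" using h tau j by blast
      then show "c (\<tau> j) = c j" using tau j by simp
    qed
  qed
  finally show ?thesis .
qed

lemma mmult_mid1: "mmult mid M = M"
proof (intro ext)
  fix i j
  have "(\<Sum>k\<in>UNIV. mid i k * M k j) = (\<Sum>k\<in>UNIV. if k = i then M k j else 0)"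
    by (rule sum.cong) (auto simp: mid_def)
  then show "mmult mid M i j = M i j" unfolding mmult_def by simp
qed
lemma mmult_mid2: "mmult M mid = M"
proof (intro ext)
  fix i j
  have "(\<Sum>k\<in>UNIV. M i k * mid k j) = (\<Sum>k\<in>UNIV. if k = j then M i k else 0)"
    by (rule sum.cong) (auto simp: mid_def)
  then show "mmult M mid i j = M i j" unfolding mmult_def by simp
qed
lemmas mmult_mid = mmult_mid1 mmult_mid2

lemma sig0: "\<sigma> 0 = 0"
proof -
  obtain M where M: "M \<in> SP" "\<psi> M = mid" using psi_surj A_SP[of 0] A0 by fastforce
  have "\<psi> (mmult (A 0) M) = mmult (\<psi> (A 0)) (\<psi> M)" using psi_mult A_SP M by simp
  then have "\<psi> M = \<psi> (A 0)" unfolding M(2) A0 mmult_mid .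
  then have "A (\<sigma> 0) = A 0" using M psiA[of 0] A0 by simp
  then show ?thesis using A_inj[of "\<sigma> 0" 0] sig_le[of 0] by simp
qed

definition tr where "tr k = (SOME j. j \<le> d \<and> mtrans (A k) = A j)"

lemma tr: "k \<le> d \<Longrightarrow> tr k \<le> d \<and> mtrans (A k) = A (tr k)"
proof -
  assume "k \<le> d"
  then have "\<exists>j. j \<le> d \<and> mtrans (A k) = A j" using AS unfolding assoc_scheme_def by blast
  then show ?thesis unfolding tr_def by (rule someI_ex)
qed

lemma tr_tr: "k \<le> d \<Longrightarrow> tr (tr k) = k"
proof -
  assume k: "k \<le> d"
  have t1: "tr k \<le> d" "mtrans (A k) = A (tr k)" using tr[OF k] by auto
  have t2: "tr (tr k) \<le> d" "mtrans (A (tr k)) = A (tr (tr k))" using tr[OF t1(1)] by auto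
  have "A (tr (tr k)) = mtrans (mtrans (A k))" using t1(2) t2(2) by simp
  also have "\<dots> = A k" unfolding mtrans_def by simp
  finally show ?thesis using A_inj[of "tr (tr k)" k] t2(1) k by simp
qed

lemma star_A: "k \<le> d \<Longrightarrow> mstar (A k) = A (tr k)"
proof -
  assume k: "k \<le> d"
  have "mstar (A k) = mtrans (A k)"
  proof (intro ext)
    fix i j
    have "A k j i = 0 \<or> A k j i = 1" using A01[OF k] .
    then show "mstar (A k) i j = mtrans (A k) i j" unfolding mstar_def mtrans_def by auto
  qed
  then show ?thesis using tr[OF k] by simp
qed

lemma sig_tr: "k \<le> d \<Longrightarrow> \<sigma> (tr k) = tr (\<sigma> k)"
proof -
  assume k: "k \<le> d"
  have t: "tr k \<le> d" using tr[OF k] by simp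
  have sk: "\<sigma> k \<le> d" using sig_le[OF k] .
  have "A (\<sigma> (tr k)) = \<psi> (mstar (A k))" using psiA[OF t] star_A[OF k] by simp
  also have "\<dots> = mstar (\<psi> (A k))" using psi_star[OF A_SP[OF k]] .
  also have "\<dots> = A (tr (\<sigma> k))" using star_A[OF sk] psiA[OF k] by simp
  finally show ?thesis using A_inj[of "\<sigma> (tr k)" "tr (\<sigma> k)"] sig_le[OF t] tr[OF sk] by simp
qed

lemma idx_tr: "idx y x = tr (idx x y)"
proof -
  have t: "tr (idx y x) \<le> d" "mtrans (A (idx y x)) = A (tr (idx y x))" using tr[OF idx(1)] by auto
  have "A (tr (idx y x)) x y = mtrans (A (idx y x)) x y" using t(2) by simp
  also have "\<dots> = 1" unfolding mtrans_def using idx(2)[of y x] by simp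
  finally have "A (tr (idx y x)) x y = 1" .
  then have "idx x y = tr (idx y x)" using Aval[OF t(1), of x y] by (simp split: if_splits)
  then show ?thesis using tr_tr[OF idx(1)[of y x]] by simp
qed

end



context ctx2 begin

definition G where "G = {(k, \<sigma> k) | k. k \<le> d}"
definition R where "R = (G \<union> G\<inverse>)\<^sup>*"

lemma G_cases: "(a,b) \<in> G \<union> G\<inverse> \<Longrightarrow> \<exists>k\<le>d. (a = k \<and> b = \<sigma> k) \<or> (b = k \<and> a = \<sigma> k)"
  unfolding G_def by blast

lemma R_le: "(i,j) \<in> R \<Longrightarrow> i \<le> d \<Longrightarrow> j \<le> d"
  unfolding R_def
proof (induction rule: rtrancl_induct)
  case (step y z)
  then obtain k where "k \<le> d" "(y = k \<and> z = \<sigma> k) \<or> (z = k \<and> y = \<sigma> k)" using G_cases by blast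
  then show ?case using sig_le by auto
qed simp

lemma R_refl: "(i,i) \<in> R" unfolding R_def by simp
lemma R_sym: "(i,j) \<in> R \<Longrightarrow> (j,i) \<in> R"
proof -
  assume h: "(i,j) \<in> R"
  have "sym (G \<union> G\<inverse>)" by (simp add: sym_Un_converse)
  then have "sym R" unfolding R_def by (rule sym_rtrancl)
  then show ?thesis using h by (rule symD)
qed
lemma R_trans: "(i,j) \<in> R \<Longrightarrow> (j,k) \<in> R \<Longrightarrow> (i,k) \<in> R"
  unfolding R_def by (rule rtrancl_trans)
lemma R_sig: "k \<le> d \<Longrightarrow> (k, \<sigma> k) \<in> R"
proof -
  assume "k \<le> d"
  then have "(k, \<sigma> k) \<in> G \<union> G\<inverse>" unfolding G_def by blast
  then show ?thesis unfolding R_def by (rule r_into_rtrancl)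
qed

lemma R_const: "\<forall>k\<le>d. c (\<sigma> k) = c k \<Longrightarrow> (i,j) \<in> R \<Longrightarrow> c i = c j"
proof -
  assume h: "\<forall>k\<le>d. c (\<sigma> k) = c k" and r: "(i,j) \<in> R"
  from r show ?thesis unfolding R_def
  proof (induction rule: rtrancl_induct)
    case (step y z)
    then obtain k where "k \<le> d" "(y = k \<and> z = \<sigma> k) \<or> (z = k \<and> y = \<sigma> k)" using G_cases by blast
    then show ?case using h step.IH by auto
  qed simp
qed

lemma R_tr: "(i,j) \<in> R \<Longrightarrow> (tr i, tr j) \<in> R"
proof -
  assume r: "(i,j) \<in> R"
  from r show ?thesis unfolding R_def
  proof (induction rule: rtrancl_induct)
    case (step y z)
    then obtain k where k: "k \<le> d" "(y = k \<and> z = \<sigma> k) \<or> (z = k \<and> y = \<sigma> k)" using G_cases by blast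
    have t: "tr k \<le> d" using tr[OF k(1)] by simp
    have "(tr k, \<sigma> (tr k)) \<in> G" unfolding G_def using t by blast
    then have "(tr k, tr (\<sigma> k)) \<in> G" using sig_tr[OF k(1)] by simp
    then have "(tr y, tr z) \<in> G \<union> G\<inverse>" using k(2) by auto
    then show ?case by (rule rtrancl_into_rtrancl[OF step.IH])
  qed simp
qed

lemma R0: "(0,j) \<in> R \<Longrightarrow> j = 0"
proof -
  assume r: "(0,j) \<in> R"
  from r show ?thesis unfolding R_def
  proof (induction rule: rtrancl_induct)
    case (step y z)
    then obtain k where k: "k \<le> d" "(y = k \<and> z = \<sigma> k) \<or> (z = k \<and> y = \<sigma> k)" using G_cases by blast
    show ?case
    proof (cases "y = k \<and> z = \<sigma> k")
      case True then show ?thesis using step.IH sig0 by simp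
    next
      case False
      then have "z = k" "\<sigma> k = 0" using k(2) step.IH by auto
      then show ?thesis using sig_inj[OF k(1), of 0] sig0 by simp
    qed
  qed simp
qed

definition cls where "cls k = {j. (k,j) \<in> R}"
definition Rep where "Rep = {k. k \<le> d \<and> (\<forall>j. (k,j) \<in> R \<longrightarrow> k \<le> j)}"
definition reps where "reps = sorted_list_of_set Rep"
definition ee where "ee = length reps - 1"
definition CC where "CC i = cls (reps ! i)"

lemma Rep_fin: "finite Rep" unfolding Rep_def by (rule finite_subset[of _ "{0..d}"]) auto
lemma set_reps: "set reps = Rep" unfolding reps_def using Rep_fin by simp
lemma dist_reps: "distinct reps" unfolding reps_def by simp
lemma sorted_reps: "sorted reps" unfolding reps_def by simp
lemma Rep0: "0 \<in> Rep" unfolding Rep_def by simp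
lemma len_reps: "length reps \<ge> 1"
  using Rep0 set_reps by (cases reps) auto
lemma le_ee: "i \<le> ee \<longleftrightarrow> i < length reps" unfolding ee_def using len_reps by auto

lemma reps0: "reps ! 0 = 0"
proof -
  obtain n where n: "n < length reps" "reps ! n = 0" using Rep0 set_reps by (metis in_set_conv_nth)
  have "reps ! 0 \<le> reps ! n" using sorted_nth_mono[OF sorted_reps _ n(1)] by simp
  then show ?thesis using n by simp
qed

lemma reps_Rep: "i \<le> ee \<Longrightarrow> reps ! i \<in> Rep" using le_ee set_reps nth_mem by blast
lemma reps_le: "i \<le> ee \<Longrightarrow> reps ! i \<le> d" using reps_Rep unfolding Rep_def by blast

lemma cls_sub: "k \<le> d \<Longrightarrow> cls k \<subseteq> {0..d}" unfolding cls_def using R_le by auto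
lemma CC_sub: "i \<le> ee \<Longrightarrow> CC i \<subseteq> {0..d}" unfolding CC_def using cls_sub reps_le by blast
lemma CC_self: "i \<le> ee \<Longrightarrow> reps ! i \<in> CC i" unfolding CC_def cls_def using R_refl by simp
lemma CC_ne: "i \<le> ee \<Longrightarrow> CC i \<noteq> {}" using CC_self by blast
lemma CC_R: "i \<le> ee \<Longrightarrow> a \<in> CC i \<Longrightarrow> (a,b) \<in> R \<Longrightarrow> b \<in> CC i"
  unfolding CC_def cls_def using R_trans by blast
lemma CC_iff: "i \<le> ee \<Longrightarrow> a \<in> CC i \<Longrightarrow> b \<in> CC i \<longleftrightarrow> (a,b) \<in> R"
proof -
  assume i: "i \<le> ee" and a: "a \<in> CC i"
  have ra: "(reps ! i, a) \<in> R" using a unfolding CC_def cls_def by simp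
  show ?thesis
  proof
    assume "b \<in> CC i"
    then have "(reps ! i, b) \<in> R" unfolding CC_def cls_def by simp
    then show "(a,b) \<in> R" using R_trans[OF R_sym[OF ra]] by blast
  next
    assume "(a,b) \<in> R" then show "b \<in> CC i" using CC_R[OF i a] by blast
  qed
qed

lemma CC0: "CC 0 = {0}"
  unfolding CC_def reps0 cls_def using R0 R_refl by auto

lemma rep_ex: "k \<le> d \<Longrightarrow> \<exists>i\<le>ee. k \<in> CC i"
proof -
  assume k: "k \<le> d"
  have fin: "finite (cls k)" using cls_sub[OF k] finite_subset by blast
  have kin: "k \<in> cls k" unfolding cls_def using R_refl by simp
  define m where "m = Min (cls k)"
  have m: "m \<in> cls k" unfolding m_def using Min_in[OF fin] kin by blast
  then have km: "(k,m) \<in> R" unfolding cls_def by simp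
  have "m \<in> Rep" unfolding Rep_def
  proof (intro CollectI conjI allI impI)
    show "m \<le> d" using R_le[OF km k] .
  next
    fix j assume "(m,j) \<in> R"
    then have "j \<in> cls k" unfolding cls_def using R_trans[OF km] by simp
    then show "m \<le> j" unfolding m_def using Min_le[OF fin] by simp
  qed
  then obtain i where i: "i < length reps" "reps ! i = m" using set_reps by (metis in_set_conv_nth)
  have "k \<in> CC i" unfolding CC_def cls_def using i(2) R_sym[OF km] by simp
  then show ?thesis using i(1) le_ee by blast
qed

lemma CC_dis: "i \<le> ee \<Longrightarrow> j \<le> ee \<Longrightarrow> i \<noteq> j \<Longrightarrow> CC i \<inter> CC j = {}"
proof (rule ccontr)
  assume ij: "i \<le> ee" "j \<le> ee" "i \<noteq> j" and "CC i \<inter> CC j \<noteq> {}"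
  then obtain z where z: "z \<in> CC i" "z \<in> CC j" by blast
  have a: "(reps ! i, z) \<in> R" "(reps ! j, z) \<in> R" using z unfolding CC_def cls_def by auto
  have r1: "(reps ! i, reps ! j) \<in> R" using R_trans[OF a(1) R_sym[OF a(2)]] .
  have r2: "(reps ! j, reps ! i) \<in> R" using R_sym[OF r1] .
  have "reps ! i \<le> reps ! j" using reps_Rep[OF ij(1)] r1 unfolding Rep_def by blast
  moreover have "reps ! j \<le> reps ! i" using reps_Rep[OF ij(2)] r2 unfolding Rep_def by blast
  ultimately have "reps ! i = reps ! j" by simp
  then have "i = j" using nth_eq_iff_index_eq[OF dist_reps] ij le_ee by blast
  then show False using ij by simp
qed

definition cidx where "cidx k = (THE i. i \<le> ee \<and> k \<in> CC i)"

lemma cidx_uniq: "i \<le> ee \<Longrightarrow> k \<in> CC i \<Longrightarrow> cidx k = i"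
  unfolding cidx_def
proof (rule the_equality)
  fix j assume "i \<le> ee" "k \<in> CC i" "j \<le> ee \<and> k \<in> CC j"
  then show "j = i" using CC_dis[of i j] by blast
qed simp

lemma cidx: "k \<le> d \<Longrightarrow> cidx k \<le> ee \<and> k \<in> CC (cidx k)"
  using rep_ex cidx_uniq by metis

lemma cidx_R: "(a,b) \<in> R \<Longrightarrow> a \<le> d \<Longrightarrow> cidx b = cidx a"
proof -
  assume r: "(a,b) \<in> R" and a: "a \<le> d"
  have c: "cidx a \<le> ee" "a \<in> CC (cidx a)" using cidx[OF a] by auto
  show ?thesis using cidx_uniq[OF c(1) CC_R[OF c r]] .
qed

end



context ctx begin

lemma sum_E: "finite S \<Longrightarrow> (\<forall>z\<in>S. f z \<in> E) \<Longrightarrow> sum f S \<in> E"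
proof (induction S rule: finite_induct)
  case empty then show ?case using E0 by simp
next
  case (insert x F) then show ?case using Eadd by simp
qed

lemma mmult_lc: "mmult (lc a) (lc b) x y =
   (\<Sum>k\<in>{0..d}. \<Sum>l\<in>{0..d}. a k * b l * mmult (A k) (A l) x y)"
proof -
  have "mmult (lc a) (lc b) x y =
      (\<Sum>z\<in>UNIV. (\<Sum>k\<in>{0..d}. a k * A k x z) * (\<Sum>l\<in>{0..d}. b l * A l z y))"
    unfolding mmult_def msum_def mscale_def by simp
  also have "\<dots> = (\<Sum>z\<in>UNIV. \<Sum>k\<in>{0..d}. \<Sum>l\<in>{0..d}. a k * b l * (A k x z * A l z y))"
    by (simp add: sum_product mult_ac)
  also have "\<dots> = (\<Sum>k\<in>{0..d}. \<Sum>z\<in>UNIV. \<Sum>l\<in>{0..d}. a k * b l * (A k x z * A l z y))"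
    by (rule sum.swap)
  also have "\<dots> = (\<Sum>k\<in>{0..d}. \<Sum>l\<in>{0..d}. \<Sum>z\<in>UNIV. a k * b l * (A k x z * A l z y))"
    by (rule sum.cong[OF refl], rule sum.swap)
  also have "\<dots> = (\<Sum>k\<in>{0..d}. \<Sum>l\<in>{0..d}. a k * b l * mmult (A k) (A l) x y)"
    unfolding mmult_def by (simp add: sum_distrib_left)
  finally show ?thesis .
qed

lemma AA_comm: "k \<le> d \<Longrightarrow> l \<le> d \<Longrightarrow> mmult (A k) (A l) = mmult (A l) (A k)"
  using AS unfolding assoc_scheme_def by blast

lemma lc_comm: "mmult (lc a) (lc b) = mmult (lc b) (lc a)"
proof (intro ext)
  fix x y
  have "mmult (lc a) (lc b) x y = (\<Sum>k\<in>{0..d}. \<Sum>l\<in>{0..d}. b l * a k * mmult (A l) (A k) x y)"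
    unfolding mmult_lc by (intro sum.cong refl) (simp add: AA_comm mult_ac)
  also have "\<dots> = (\<Sum>l\<in>{0..d}. \<Sum>k\<in>{0..d}. b l * a k * mmult (A l) (A k) x y)"
    by (rule sum.swap)
  also have "\<dots> = mmult (lc b) (lc a) x y" unfolding mmult_lc ..
  finally show "mmult (lc a) (lc b) x y = mmult (lc b) (lc a) x y" .
qed

lemma AA_const: "k \<le> d \<Longrightarrow> l \<le> d \<Longrightarrow> idx x y = idx x' y' \<Longrightarrow>
    mmult (A k) (A l) x y = mmult (A k) (A l) x' y'"
proof -
  assume kl: "k \<le> d" "l \<le> d" and i: "idx x y = idx x' y'"
  have "mmult (A k) (A l) \<in> lin_span UNIV A d" using AS kl unfolding assoc_scheme_def by blast
  then obtain c where "mmult (A k) (A l) = lc c" unfolding lin_span_def by blast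
  then show ?thesis using i unfolding lc_eval by simp
qed

lemma const_SP: "(\<And>x y x' y'. idx x y = idx x' y' \<Longrightarrow> M x y = M x' y') \<Longrightarrow> (\<And>x y. M x y \<in> E) \<Longrightarrow> M \<in> SP"
proof -
  assume cst: "\<And>x y x' y'. idx x y = idx x' y' \<Longrightarrow> M x y = M x' y'" and ME: "\<And>x y. M x y \<in> E"
  define p where "p m = (SOME p. idx (fst p) (snd p) = m)" for m
  define c where "c m = M (fst (p m)) (snd (p m))" for m
  have pm: "idx (fst (p m)) (snd (p m)) = m" if md: "m \<le> d" for m
  proof -
    obtain x y where "idx x y = m" using idx_surj[OF md] by blast
    then have "\<exists>p. idx (fst p) (snd p) = m" by (intro exI[of _ "(x,y)"]) simp
    then show ?thesis unfolding p_def by (rule someI_ex)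
  qed
  have "M = lc c"
  proof (intro ext)
    fix x y
    have "c (idx x y) = M x y" unfolding c_def using cst pm[OF idx(1)] by metis
    then show "M x y = lc c x y" unfolding lc_eval by simp
  qed
  moreover have "\<forall>k\<le>d. c k \<in> E" unfolding c_def using ME by simp
  ultimately show ?thesis using lc_SP by simp
qed

lemma mult_SP: "M \<in> SP \<Longrightarrow> N \<in> SP \<Longrightarrow> mmult M N \<in> SP"
proof -
  assume "M \<in> SP" "N \<in> SP"
  then obtain a b where a: "\<forall>k\<le>d. a k \<in> E" "M = lc a" and b: "\<forall>k\<le>d. b k \<in> E" "N = lc b"
    unfolding SP_iff by blast
  show ?thesis
  proof (rule const_SP)
    fix x y x' y' assume i: "idx x y = idx x' y'"
    show "mmult M N x y = mmult M N x' y'" unfolding a b mmult_lc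
      using AA_const[OF _ _ i] by (intro sum.cong refl) simp
  next
    fix x y
    have "mmult M N x y = (\<Sum>z\<in>UNIV. a (idx x z) * b (idx z y))"
      unfolding a b lc_eval mmult_def by simp
    also have "\<dots> \<in> E" using a b idx(1) Emul by (intro sum_E) auto
    finally show "mmult M N x y \<in> E" .
  qed
qed

end

context ctx2 begin

abbreviation BB where "BB i \<equiv> msum A (CC i)"

lemma BB_eval: "i \<le> ee \<Longrightarrow> BB i x y = (if idx x y \<in> CC i then 1 else 0)"
  using msumA_eval[OF CC_sub] by simp

lemma BB_lc: "i \<le> ee \<Longrightarrow> BB i = lc (\<lambda>k. if k \<in> CC i then 1 else 0)"
  unfolding lc_eval by (intro ext) (simp add: BB_eval)

lemma BB_SP: "i \<le> ee \<Longrightarrow> BB i \<in> SP"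
  unfolding BB_lc using lc_SP E0 E1 by simp

lemma BB_fixed: "i \<le> ee \<Longrightarrow> \<psi> (BB i) = BB i"
proof -
  assume i: "i \<le> ee"
  have "\<forall>k\<le>d. (if \<sigma> k \<in> CC i then 1 else 0) = (if k \<in> CC i then (1::complex) else 0)"
  proof (intro allI impI)
    fix k assume k: "k \<le> d"
    have "\<sigma> k \<in> CC i \<longleftrightarrow> k \<in> CC i"
      using CC_R[OF i, of k "\<sigma> k"] CC_R[OF i, of "\<sigma> k" k] R_sig[OF k] R_sym by blast
    then show "(if \<sigma> k \<in> CC i then 1 else 0) = (if k \<in> CC i then (1::complex) else 0)" by simp
  qed
  then show ?thesis unfolding BB_lc[OF i] using fixed_iff E0 E1 by simp
qed

lemma spanB_eval: "msum (\<lambda>i. mscale (b i) (BB i)) {0..ee} x y = b (cidx (idx x y))"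
proof -
  have c: "cidx (idx x y) \<le> ee" "idx x y \<in> CC (cidx (idx x y))" using cidx[OF idx(1)] by auto
  have "(\<Sum>i\<in>{0..ee}. b i * BB i x y) = (\<Sum>i\<in>{0..ee}. if i = cidx (idx x y) then b i else 0)"
  proof (rule sum.cong[OF refl])
    fix i assume "i \<in> {0..ee}"
    then have i: "i \<le> ee" by simp
    have "idx x y \<in> CC i \<longleftrightarrow> i = cidx (idx x y)" using cidx_uniq[OF i] c by auto
    then show "b i * BB i x y = (if i = cidx (idx x y) then b i else 0)" using BB_eval[OF i] by simp
  qed
  then show ?thesis unfolding msum_def mscale_def using c by simp
qed

lemma FIX: "{M \<in> SP. \<psi> M = M} = lin_span E BB ee"
proof
  show "{M \<in> SP. \<psi> M = M} \<subseteq> lin_span E BB ee"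
  proof
    fix M assume "M \<in> {M \<in> SP. \<psi> M = M}"
    then obtain c where c: "\<forall>k\<le>d. c k \<in> E" "M = lc c" "\<psi> M = M" unfolding SP_iff by blast
    then have cs: "\<forall>k\<le>d. c (\<sigma> k) = c k" using fixed_iff by simp
    define b where "b i = c (reps ! i)" for i
    have "M = msum (\<lambda>i. mscale (b i) (BB i)) {0..ee}"
    proof (intro ext)
      fix x y
      have ci: "cidx (idx x y) \<le> ee" "idx x y \<in> CC (cidx (idx x y))" using cidx[OF idx(1)] by auto
      have "(reps ! cidx (idx x y), idx x y) \<in> R" using ci(2) unfolding CC_def cls_def by simp
      then have "c (reps ! cidx (idx x y)) = c (idx x y)" using R_const[OF cs] by blast
      then show "M x y = msum (\<lambda>i. mscale (b i) (BB i)) {0..ee} x y"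
        unfolding spanB_eval b_def c(2) lc_eval by simp
    qed
    moreover have "\<forall>i\<le>ee. b i \<in> E" unfolding b_def using c(1) reps_le by simp
    ultimately show "M \<in> lin_span E BB ee" unfolding lin_span_def by blast
  qed
next
  show "lin_span E BB ee \<subseteq> {M \<in> SP. \<psi> M = M}"
  proof
    fix M assume "M \<in> lin_span E BB ee"
    then obtain b where b: "\<forall>i\<le>ee. b i \<in> E" "M = msum (\<lambda>i. mscale (b i) (BB i)) {0..ee}"
      unfolding lin_span_def by blast
    define c where "c k = b (cidx k)" for k
    have M: "M = lc c" unfolding b(2) lc_eval c_def by (intro ext) (simp add: spanB_eval)
    have cE: "\<forall>k\<le>d. c k \<in> E" unfolding c_def using b(1) cidx by simp
    have "\<forall>k\<le>d. c (\<sigma> k) = c k" unfolding c_def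
    proof (intro allI impI)
      fix k assume k: "k \<le> d"
      show "b (cidx (\<sigma> k)) = b (cidx k)" using cidx_R[OF R_sig[OF k] k] by simp
    qed
    then have "\<psi> M = M" unfolding M using fixed_iff[OF cE] by simp
    then show "M \<in> {M \<in> SP. \<psi> M = M}" using M lc_SP[OF cE] by simp
  qed
qed

lemma BB_assoc: "assoc_scheme BB ee"
  unfolding assoc_scheme_def
proof (intro conjI allI impI)
  fix i x y assume i: "i \<le> ee"
  show "BB i x y = 0 \<or> BB i x y = 1" using BB_eval[OF i] by simp
next
  fix i assume i: "i \<le> ee"
  obtain k where k: "k \<in> CC i" using CC_ne[OF i] by blast
  then have kd: "k \<le> d" using CC_sub[OF i] by auto
  obtain x y where "idx x y = k" using idx_surj[OF kd] by blast
  then have "BB i x y = 1" using BB_eval[OF i] k by simp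
  then show "BB i \<noteq> mzero" unfolding mzero_def by (metis zero_neq_one)
next
  show "BB 0 = mid" unfolding CC0 msum_def using A0 by simp
next
  have "msum BB {0..ee} = msum (\<lambda>i. mscale 1 (BB i)) {0..ee}"
    unfolding mscale_def by simp
  then show "msum BB {0..ee} = mones" unfolding mones_def using spanB_eval[of "\<lambda>_. 1"] by (simp add: fun_eq_iff)
next
  fix i assume i: "i \<le> ee"
  define r where "r = reps ! i"
  have r: "r \<le> d" "r \<in> CC i" unfolding r_def using reps_le[OF i] CC_self[OF i] by auto
  have trd: "tr r \<le> d" using tr[OF r(1)] by simp
  define j where "j = cidx (tr r)"
  have j: "j \<le> ee" "tr r \<in> CC j" unfolding j_def using cidx[OF trd] by auto
  have key: "tr k \<in> CC i \<longleftrightarrow> k \<in> CC j" if k: "k \<le> d" for k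
  proof -
    have "tr k \<in> CC i \<longleftrightarrow> (r, tr k) \<in> R" using CC_iff[OF i r(2)] .
    also have "\<dots> \<longleftrightarrow> (tr r, k) \<in> R"
    proof
      assume "(r, tr k) \<in> R"
      from R_tr[OF this] show "(tr r, k) \<in> R" using tr_tr[OF k] by simp
    next
      assume "(tr r, k) \<in> R"
      from R_tr[OF this] show "(r, tr k) \<in> R" using tr_tr[OF r(1)] by simp
    qed
    also have "\<dots> \<longleftrightarrow> k \<in> CC j" using CC_iff[OF j] by simp
    finally show ?thesis .
  qed
  have "mtrans (BB i) = BB j"
  proof (intro ext)
    fix x y
    show "mtrans (BB i) x y = BB j x y"
    proof -
      have "mtrans (BB i) x y = (if idx y x \<in> CC i then 1 else 0)"
        unfolding mtrans_def using BB_eval[OF i] by simp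
      also have "\<dots> = (if tr (idx x y) \<in> CC i then 1 else 0)" using idx_tr[of y x] by simp
      also have "\<dots> = (if idx x y \<in> CC j then 1 else 0)" using key[OF idx(1)] by simp
      also have "\<dots> = BB j x y" using BB_eval[OF j(1)] by simp
      finally show ?thesis .
    qed
  qed
  then show "\<exists>j\<le>ee. mtrans (BB i) = BB j" using j(1) by blast
next
  fix i j assume i: "i \<le> ee" and j: "j \<le> ee"
  show "mmult (BB i) (BB j) = mmult (BB j) (BB i)" unfolding BB_lc[OF i] BB_lc[OF j] by (rule lc_comm)
next
  fix i j assume i: "i \<le> ee" and j: "j \<le> ee"
  have "mmult (BB i) (BB j) \<in> SP" using mult_SP BB_SP i j by blast
  moreover have "\<psi> (mmult (BB i) (BB j)) = mmult (BB i) (BB j)"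
    using psi_mult[OF BB_SP[OF i] BB_SP[OF j]] BB_fixed i j by simp
  ultimately have "mmult (BB i) (BB j) \<in> lin_span E BB ee" using FIX by blast
  then show "mmult (BB i) (BB j) \<in> lin_span UNIV BB ee" unfolding lin_span_def by blast
qed

lemma main: "\<exists>B e. subscheme B e A d \<and> {M \<in> lin_span E A d. \<psi> M = M} = lin_span E B e"
proof (intro exI conjI)
  show "subscheme BB ee A d"
    unfolding subscheme_def
  proof (intro conjI exI[of _ CC])
    show "assoc_scheme BB ee" by (rule BB_assoc)
    show "CC 0 = {0}" by (rule CC0)
    show "\<forall>i\<le>ee. CC i \<noteq> {}" using CC_ne by blast
    show "\<forall>i\<le>ee. \<forall>j\<le>ee. i \<noteq> j \<longrightarrow> CC i \<inter> CC j = {}" using CC_dis by blast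
    show "(\<Union>i\<in>{0..ee}. CC i) = {0..d}"
    proof
      show "(\<Union>i\<in>{0..ee}. CC i) \<subseteq> {0..d}" using CC_sub by fastforce
      show "{0..d} \<subseteq> (\<Union>i\<in>{0..ee}. CC i)" using rep_ex by fastforce
    qed
    show "\<forall>i\<le>ee. BB i = msum A (CC i)" by simp
  qed
  show "{M \<in> lin_span E A d. \<psi> M = M} = lin_span E BB ee" by (rule FIX)
qed

end


theorem lemma3p4:
  fixes A :: "nat \<Rightarrow> ('v::finite) cmat" and d :: nat
    and E :: "complex set" and \<psi> :: "'v cmat \<Rightarrow> 'v cmat"
  assumes "assoc_scheme A d"
    and "subfield_complex E"
    and "\<forall>x\<in>E. cnj x \<in> E"
    and "contains_splitting_field E A d"
    and "BM_automorphism E A d \<psi>"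
  shows "\<exists>B e. subscheme B e A d \<and>
           {M \<in> lin_span E A d. \<psi> M = M} = lin_span E B e"
proof -
  interpret ctx A d E \<psi> using assms(1,2,5) by unfold_locales
  obtain \<sigma> where s: "\<forall>i\<le>d. \<sigma> i \<le> d \<and> \<psi> (A i) = A (\<sigma> i)" using sigma_exists by blast
  interpret ctx2 A d E \<psi> \<sigma> using s by unfold_locales auto
  show ?thesis by (rule main)
qed

end
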